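(* Let $\mathbf{v}$ be the functional $\langle\mathbf{v},p\rangle=\int_{-1}^1p(x)(1-x^2)^{-1/2}dx$ with monic orthogonal polynomials $(T_n)$ ($xT_n=T_{n+1}+a_nT_{n-1}$, $a_1=\frac12$, $a_n=\frac14$ for $n\ge2$), and let $(U_n)$ be the monic Chebyshev polynomials of the second kind ($xU_n=U_{n+1}+\frac14U_{n-1}$, $U_{-1}=0,U_0=1$). Then $$\langle\mathbf{v}^{-1},p\rangle=-\frac{1}{\pi^2}\int_{-1}^1\frac{p(x)-p(0)-p'(0)x}{x^2}(1-x^2)^{1/2}dx+\frac{1}{\pi}p(0),$$ $\mathbf{v}^{-1}$ is quasi-definite, and its monic orthogonal polynomials are $T^-_0=1$, $T^-_1=x$, $T^-_n=U_n+\gamma_nU_{n-2}$ for $n\ge2$ with $\gamma_n=\frac{n+1}{4(n-1)}$ for even $n$ and $\gamma_n=\frac14$ for odd $n$. They satisfy $xT^-_n=T^-_{n+1}+a^-_nT^-_{n-1}$ with $a^-_1=-\frac12$, $a^-_n=\frac{n+1}{4(n-1)}$ for even $n\ge2$, and $a^-_n=\frac{n-2}{4n}$ for odd $n\ge3$.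
   Context: Moments $\mathbf{v}_n=\langle\mathbf{v},x^n\rangle$. The inverse $\mathbf{v}^{-1}$ is the functional with moments $(\mathbf{v}^{-1})_0=1/\mathbf{v}_0$, $(\mathbf{v}^{-1})_n=-\frac{1}{\mathbf{v}_0}\sum_{k=0}^{n-1}\mathbf{v}_{n-k}(\mathbf{v}^{-1})_k$ ($n\ge1$). Quasi-definite: all leading principal submatrices of the Hankel moment matrix nonsingular. *)

theory Defs
  imports "HOL-Analysis.Analysis" "HOL-Computational_Algebra.Polynomial" "Jordan_Normal_Form.Determinant"
begin

text \<open>A linear functional on real polynomials is given by its moment sequence
  u :: nat => real, with u n = <u, x^n>.\<close>

definition fapp :: "(nat \<Rightarrow> real) \<Rightarrow> real poly \<Rightarrow> real" where
  "fapp u p = (\<Sum>k\<le>degree p. coeff p k * u k)"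

definition cheb_mom :: "nat \<Rightarrow> real" where
  "cheb_mom n = integral {-1..1} (\<lambda>x::real. x ^ n * (1 - x\<^sup>2) powr (-1/2))"

fun finv :: "(nat \<Rightarrow> real) \<Rightarrow> nat \<Rightarrow> real" where
  "finv v 0 = 1 / v 0"
| "finv v (Suc n) = - (1 / v 0) * (\<Sum>k<Suc n. v (Suc n - k) * finv v k)"

definition quasi_definite :: "(nat \<Rightarrow> real) \<Rightarrow> bool" where
  "quasi_definite u \<longleftrightarrow>
     (\<forall>n. Determinant.det (mat (Suc n) (Suc n) (\<lambda>(i,j). u (i + j))) \<noteq> 0)"

definition monic_OPS :: "(nat \<Rightarrow> real) \<Rightarrow> (nat \<Rightarrow> real poly) \<Rightarrow> bool" where
  "monic_OPS u P \<longleftrightarrow>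
     (\<forall>n. degree (P n) = n \<and> lead_coeff (P n) = 1 \<and>
          (\<forall>k<n. fapp u (monom 1 k * P n) = 0) \<and>
          fapp u (monom 1 n * P n) \<noteq> 0)"

fun chebU :: "nat \<Rightarrow> real poly" where
  "chebU 0 = 1"
| "chebU (Suc 0) = [:0, 1:]"
| "chebU (Suc (Suc n)) = [:0, 1:] * chebU (Suc n) - Polynomial.smult (1/4) (chebU n)"

definition gammaM :: "nat \<Rightarrow> real" where
  "gammaM n = (if even n then (real n + 1) / (4 * (real n - 1)) else 1/4)"

definition Tminus :: "nat \<Rightarrow> real poly" where
  "Tminus n = (if n = 0 then 1 else if n = 1 then [:0, 1:]
               else chebU n + Polynomial.smult (gammaM n) (chebU (n - 2)))"

definition aminus :: "nat \<Rightarrow> real" where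
  "aminus n = (if n = 1 then - 1/2
               else if even n then (real n + 1) / (4 * (real n - 1))
               else (real n - 2) / (4 * real n))"

end

theory Submission
  imports Defs "HOL-Computational_Algebra.Formal_Power_Series"
begin

definition Am :: "nat \<Rightarrow> real" where
  "Am n = (if even n then (-1)^(n div 2) * ((-1/2) gchoose (n div 2)) else 0)"
definition Bm :: "nat \<Rightarrow> real" where
  "Bm n = (if even n then (-1)^(n div 2) * ((1/2) gchoose (n div 2)) else 0)"

lemma gch_step: "(a::real) gchoose Suc m = (a - real m) / (real m + 1) * (a gchoose m)"
proof -
  have "a * (a gchoose m) = real m * (a gchoose m) + real (Suc m) * (a gchoose Suc m)"
    using gbinomial_mult_1[of a m] by simp
  then have eq: "(real m + 1) * (a gchoose Suc m) = (a - real m) * (a gchoose m)"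
    by (simp add: algebra_simps)
  have pos: "real m + 1 \<noteq> 0" by simp
  show ?thesis using eq pos by (simp add: field_simps)
qed

lemma Am_0[simp]: "Am 0 = 1" and Am_1[simp]: "Am 1 = 0" and Bm_0[simp]: "Bm 0 = 1" and Bm_1[simp]: "Bm 1 = 0"
  by (simp_all add: Am_def Bm_def)

lemma Am_even: "Am (2*m) = (-1)^m * ((-1/2) gchoose m)" by (simp add: Am_def)
lemma Bm_even: "Bm (2*m) = (-1)^m * ((1/2) gchoose m)" by (simp add: Bm_def)

lemma Am_rec: "Am (Suc (Suc n)) = (real n + 1) / (real n + 2) * Am n"
proof (cases "even n")
  case True
  then obtain m where n: "n = 2*m" by blast
  have d: "Suc (Suc n) div 2 = Suc m" "n div 2 = m" using n by auto
  have "Am (Suc (Suc n)) = (-1)^Suc m * ((-1/2) gchoose Suc m)"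
    using True d by (simp add: Am_def)
  also have "\<dots> = (-1)^Suc m * ((-1/2 - real m) / (real m + 1) * ((-1/2) gchoose m))"
    by (simp add: gch_step)
  also have "\<dots> = (real n + 1) / (real n + 2) * ((-1)^m * ((-1/2) gchoose m))"
    using n by (simp add: field_simps)
  also have "\<dots> = (real n + 1) / (real n + 2) * Am n"
    using True d by (simp add: Am_def)
  finally show ?thesis .
qed (simp add: Am_def)

lemma Bm_pascal: "Bm (Suc (Suc n)) = Am (Suc (Suc n)) - Am n"
proof (cases "even n")
  case True
  then obtain m where n: "n = 2*m" by blast
  have d: "Suc (Suc n) div 2 = Suc m" "n div 2 = m" using n by auto
  have e: "(1/2::real) = (-1/2) + 1" by simp
  have "((1/2::real) gchoose Suc m) = ((-1/2) gchoose m) + ((-1/2) gchoose Suc m)"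
    by (subst e, rule gbinomial_Suc_Suc)
  then show ?thesis using True d by (simp add: Am_def Bm_def algebra_simps)
qed (simp add: Am_def Bm_def)

lemma conv_AB: "(\<Sum>k\<le>N. Am (N-k) * Bm k) = (if N = 0 then 1 else 0)"
proof (cases "even N")
  case False
  have "Am (N-k) * Bm k = 0" if "k \<le> N" for k
    using False that by (auto simp: Am_def Bm_def)
  then show ?thesis using False by (auto intro!: sum.neutral)
next
  case True
  then obtain M where N: "N = 2*M" by blast
  let ?f = "\<lambda>k. Am (N-k) * Bm k"
  have "(\<Sum>k\<le>N. ?f k) = (\<Sum>k\<in>(\<lambda>j. 2*j) ` {..M}. ?f k)"
    by (rule sum.mono_neutral_right) (auto simp: N Am_def Bm_def)
  also have "\<dots> = (\<Sum>j\<le>M. ?f (2*j))"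
    by (rule sum.reindex_cong[where l="\<lambda>j. 2*j"]) (auto simp: inj_on_def)
  also have "\<dots> = (\<Sum>j\<le>M. (-1)^M * (((1/2) gchoose j) * ((-1/2) gchoose (M - j))))"
  proof (rule sum.cong)
    fix j assume j: "j \<in> {..M}"
    have a: "N - 2*j = 2*(M-j)" using N by simp
    have p: "(-1::real)^(M-j) * (-1)^j = (-1)^M"
      using j by (simp add: power_add[symmetric])
    show "?f (2*j) = (-1)^M * (((1/2) gchoose j) * ((-1/2) gchoose (M - j)))"
      unfolding a Am_even Bm_even using p by (simp add: algebra_simps)
  qed simp
  also have "\<dots> = (-1)^M * ((1/2 + (-1/2::real)) gchoose M)"
    by (simp add: sum_distrib_left[symmetric] atMost_atLeast0 gbinomial_Vandermonde)
  also have "\<dots> = (if N = 0 then 1 else 0)"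
    using N by (simp add: gbinomial_0_left)
  finally show ?thesis .
qed

lemma rlem: "(x::real)\<^sup>2 < 1 \<Longrightarrow> (1 - x\<^sup>2) powr (-1/2) = 1 / sqrt (1 - x\<^sup>2)"
proof -
  assume "x\<^sup>2 < 1"
  have "(1 - x\<^sup>2) powr (-1/2) = (1-x\<^sup>2) powr (-(1/2))" by simp
  also have "\<dots> = 1/((1-x\<^sup>2) powr (1/2))" by (rule powr_minus_divide)
  also have "\<dots> = 1/sqrt(1-x\<^sup>2)" using \<open>x\<^sup>2 < 1\<close> by (simp add: powr_half_sqrt)
  finally show ?thesis .
qed

lemma sqd: "(x::real)\<^sup>2 < 1 \<Longrightarrow> ((\<lambda>x. sqrt (1 - x\<^sup>2)) has_real_derivative (- x / sqrt (1 - x\<^sup>2))) (at x)"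
proof -
  assume h: "x\<^sup>2 < 1"
  have "DERIV sqrt (1-x\<^sup>2) :> inverse (sqrt (1-x\<^sup>2))/2" by (rule DERIV_real_sqrt) (use h in simp)
  moreover have "((\<lambda>x. 1 - x\<^sup>2) has_real_derivative (-(2*x))) (at x)"
    by (auto intro!: derivative_eq_intros)
  ultimately have "((\<lambda>x. sqrt (1-x\<^sup>2)) has_real_derivative (inverse (sqrt (1-x\<^sup>2))/2 * (-(2*x)))) (at x)"
    by (rule DERIV_chain2)
  then show ?thesis by (rule DERIV_cong) (simp add: field_simps)
qed

lemma in_open: "x \<in> {-1<..<1::real} \<Longrightarrow> x\<^sup>2 < 1"
  by (simp add: abs_square_less_1 abs_less_iff)

lemma G_alg:
  fixes x s :: real and k :: nat
  assumes s: "s > 0" and ss: "s * s = 1 - x\<^sup>2"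
  shows "real (Suc k) * x^(Suc k - Suc 0) * s + (- x / s) * x^(Suc k)
       = ((real k + 1) * x^k - (real k + 2) * x^(k+2)) * (1 / s)"
proof -
  have "real (Suc k) * x^(Suc k - Suc 0) * s + (- x / s) * x^(Suc k)
      = (real (Suc k) * x^k * (s * s) - x * x^(Suc k)) / s"
    using s by (simp add: field_simps)
  also have "\<dots> = ((real k + 1) * x^k - (real k + 2) * x^(k+2)) * (1 / s)"
    unfolding ss using s by (simp add: field_simps power2_eq_square)
  finally show ?thesis .
qed
lemma W_alg:
  fixes x s :: real and n :: nat
  assumes s: "s > 0" and ss: "s * s = 1 - x\<^sup>2"
  shows "x^n * (1/s) - x^(n+2) * (1/s) = x^n * s"
proof -
  have "x^n * (1/s) - x^(n+2) * (1/s) = x^n * (s * s) / s"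
    unfolding ss by (simp add: algebra_simps power2_eq_square diff_divide_distrib)
  also have "\<dots> = x^n * s" using s by simp
  finally show ?thesis .
qed
lemma comb_alg:
  fixes k :: nat and a b c :: real
  shows "(1 / (real k + 2)) * ((real k + 1) * (x^k * c) - ((real k + 1) * x^k - (real k + 2) * x^(k+2)) * c) = x^(Suc (Suc k)) * c"
proof -
  have "real k + 2 \<noteq> 0" by simp
  then show ?thesis by (simp add: field_simps)
qed

lemma mom_int: "((\<lambda>x. x^n * (1 - x\<^sup>2) powr (-1/2)) has_integral (pi * Am n)) {-1..1}"
proof (induction n rule: less_induct)
  case (less n)
  show ?case
  proof (cases n)
    case 0
    have "((\<lambda>x. x^0 * (1 - x\<^sup>2) powr (-1/2)) has_integral (arcsin 1 - arcsin (-1))) {-1..1}"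
    proof (rule fundamental_theorem_of_calculus_interior[of "-1" 1 arcsin "\<lambda>x. x^0 * (1 - x\<^sup>2) powr (-1/2)"])
      show "continuous_on {-1..1} arcsin" by (rule continuous_on_arcsin')
      fix x :: real assume x: "x \<in> {-1<..<1}"
      have h: "x\<^sup>2 < 1" using in_open[OF x] .
      have "DERIV arcsin x :> inverse (sqrt (1 - x\<^sup>2))" using x by (intro DERIV_arcsin) auto
      then have "DERIV arcsin x :> x^0 * (1 - x\<^sup>2) powr (-1/2)"
        by (rule DERIV_cong) (unfold rlem[OF h], simp add: divide_inverse)
      then show "(arcsin has_vector_derivative x^0 * (1 - x\<^sup>2) powr (-1/2)) (at x)"
        by (simp add: has_real_derivative_iff_has_vector_derivative)
    qed simp
    then show ?thesis using 0 by simp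
  next
    case (Suc m)
    show ?thesis
    proof (cases m)
      case 0
      have "((\<lambda>x. x^1 * (1 - x\<^sup>2) powr (-1/2)) has_integral ((\<lambda>x. - sqrt (1-x\<^sup>2)) 1 - (\<lambda>x. - sqrt (1-x\<^sup>2)) (-1))) {-1..1}"
      proof (rule fundamental_theorem_of_calculus_interior[of "-1" 1 "\<lambda>x. - sqrt (1-x\<^sup>2)" "\<lambda>x. x^1 * (1 - x\<^sup>2) powr (-1/2)"])
        show "continuous_on {-1..1} (\<lambda>x::real. - sqrt (1-x\<^sup>2))" by (intro continuous_intros)
        fix x :: real assume x: "x \<in> {-1<..<1}"
        have h: "x\<^sup>2 < 1" using in_open[OF x] .
        have "((\<lambda>x. - sqrt (1 - x\<^sup>2)) has_real_derivative - (- x / sqrt (1 - x\<^sup>2))) (at x)"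
          by (intro DERIV_minus sqd h)
        then have "((\<lambda>x. - sqrt (1 - x\<^sup>2)) has_real_derivative x^1 * (1 - x\<^sup>2) powr (-1/2)) (at x)"
          by (rule DERIV_cong) (unfold rlem[OF h], simp)
        then show "((\<lambda>x. - sqrt (1 - x\<^sup>2)) has_vector_derivative x^1 * (1 - x\<^sup>2) powr (-1/2)) (at x)"
          by (simp add: has_real_derivative_iff_has_vector_derivative)
      qed simp
      then show ?thesis using Suc 0 by (simp add: Am_def)
    next
      case (Suc k)
      have n: "n = Suc (Suc k)" using \<open>n = Suc m\<close> Suc by simp
      let ?r = "\<lambda>x::real. (1 - x\<^sup>2) powr (-1/2)"
      let ?G = "\<lambda>x::real. x^(Suc k) * sqrt (1-x\<^sup>2)"
      let ?g = "\<lambda>x::real. ((real k + 1) * x^k - (real k + 2) * x^(k+2)) * ?r x"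
      have G: "(?g has_integral (?G 1 - ?G (-1))) {-1..1}"
      proof (rule fundamental_theorem_of_calculus_interior[of "-1" 1 ?G ?g])
        show "continuous_on {-1..1} ?G" by (intro continuous_intros)
        fix x :: real assume x: "x \<in> {-1<..<1}"
        have h: "x\<^sup>2 < 1" using in_open[OF x] .
        have s: "sqrt (1 - x\<^sup>2) > 0" using h by simp
        have s2: "(sqrt (1 - x\<^sup>2))\<^sup>2 = 1 - x\<^sup>2" using h by simp
        have "(?G has_real_derivative (real (Suc k) * x^(Suc k - Suc 0) * sqrt (1-x\<^sup>2) + (- x / sqrt (1 - x\<^sup>2)) * x^(Suc k))) (at x)"
          by (intro DERIV_mult DERIV_pow sqd h)
        then have "(?G has_real_derivative ?g x) (at x)"
        proof (rule DERIV_cong)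
          have ss: "sqrt (1 - x\<^sup>2) * sqrt (1 - x\<^sup>2) = 1 - x\<^sup>2" using h by simp
          show "real (Suc k) * x^(Suc k - Suc 0) * sqrt (1-x\<^sup>2) + (- x / sqrt (1 - x\<^sup>2)) * x^(Suc k) = ?g x"
            unfolding rlem[OF h] by (rule G_alg[OF s ss])
        qed
        then show "(?G has_vector_derivative ?g x) (at x)"
          by (simp add: has_real_derivative_iff_has_vector_derivative)
      qed simp
      have G0: "(?g has_integral 0) {-1..1}" using G by simp
      have IH: "((\<lambda>x. x^k * ?r x) has_integral (pi * Am k)) {-1..1}"
        using less n by simp
      have "((\<lambda>x. (1 / (real k + 2)) * ((real k + 1) * (x^k * ?r x) - ?g x)) has_integral
             ((1 / (real k + 2)) * ((real k + 1) * (pi * Am k) - 0))) {-1..1}"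
        by (intro has_integral_mult_right has_integral_diff IH G0)
      then have "((\<lambda>x. x^n * ?r x) has_integral ((1 / (real k + 2)) * ((real k + 1) * (pi * Am k) - 0))) {-1..1}"
        by (rule has_integral_eq[rotated]) (simp only: comb_alg n)
      moreover have "(1 / (real k + 2)) * ((real k + 1) * (pi * Am k) - 0) = pi * Am n"
        by (simp add: n Am_rec)
      ultimately show ?thesis by simp
    qed
  qed
qed

lemma cheb_mom_eq: "cheb_mom n = pi * Am n"
  unfolding cheb_mom_def using mom_int by (rule integral_unique)

lemma w_int: "((\<lambda>x. x^n * (1 - x\<^sup>2) powr (1/2)) has_integral (pi * (Am n - Am (n+2)))) {-1..1}"
proof -
  have "((\<lambda>x. x^n * (1 - x\<^sup>2) powr (-1/2) - x^(n+2) * (1 - x\<^sup>2) powr (-1/2)) has_integral (pi * Am n - pi * Am (n+2))) {-1..1}"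
    by (intro has_integral_diff mom_int)
  then have "((\<lambda>x. x^n * (1 - x\<^sup>2) powr (-1/2) - x^(n+2) * (1 - x\<^sup>2) powr (-1/2)) has_integral (pi * (Am n - Am (n+2)))) {-1..1}"
    by (simp add: right_diff_distrib)
  then show ?thesis
  proof (rule has_integral_eq[rotated])
    fix x :: real assume x: "x \<in> {-1..1}"
    then have "x\<^sup>2 \<le> 1" by (simp add: abs_square_le_1 abs_le_iff)
    show "x^n * (1 - x\<^sup>2) powr (-1/2) - x^(n+2) * (1 - x\<^sup>2) powr (-1/2) = x^n * (1 - x\<^sup>2) powr (1/2)"
    proof (cases "x\<^sup>2 = 1")
      case True then show ?thesis by simp
    next
      case False
      then have h: "x\<^sup>2 < 1" using \<open>x\<^sup>2 \<le> 1\<close> by simp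
      have s: "sqrt (1 - x\<^sup>2) > 0" using h by simp
      have ss: "sqrt (1 - x\<^sup>2) * sqrt (1 - x\<^sup>2) = 1 - x\<^sup>2" using h by simp
      show ?thesis unfolding rlem[OF h] W_alg[OF s ss] using h by (simp add: powr_half_sqrt)
    qed
  qed
qed

lemma finv_eq: "finv cheb_mom n = Bm n / pi"
proof (induction n rule: less_induct)
  case (less n)
  show ?case
  proof (cases n)
    case 0 then show ?thesis by (simp add: cheb_mom_eq)
  next
    case (Suc m)
    have "(\<Sum>k<Suc m. cheb_mom (Suc m - k) * finv cheb_mom k) = (\<Sum>k<Suc m. pi * (Am (Suc m - k) * Bm k) / pi)"
    proof (rule sum.cong)
      fix k assume "k \<in> {..<Suc m}"
      then have "k < n" using Suc by simp
      then have "finv cheb_mom k = Bm k / pi" by (rule less.IH)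
      then show "cheb_mom (Suc m - k) * finv cheb_mom k = pi * (Am (Suc m - k) * Bm k) / pi"
        by (simp add: cheb_mom_eq)
    qed simp
    also have "\<dots> = (\<Sum>k<Suc m. Am (Suc m - k) * Bm k)" by simp
    also have "\<dots> = - Bm (Suc m)"
    proof -
      have c: "(\<Sum>k<Suc (Suc m). Am (Suc m - k) * Bm k) = 0"
        using conv_AB[of "Suc m"] by (simp only: lessThan_Suc_atMost) simp
      have "(\<Sum>k<Suc m. Am (Suc m - k) * Bm k) + Am (Suc m - Suc m) * Bm (Suc m) = 0"
        using c by (simp only: sum.lessThan_Suc)
      then show ?thesis by simp
    qed
    finally have "(\<Sum>k<Suc m. cheb_mom (Suc m - k) * finv cheb_mom k) = - Bm (Suc m)" .
    then show ?thesis using Suc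
      by (simp only: finv.simps) (simp add: cheb_mom_eq)
  qed
qed

lemma fapp_ext: "degree p \<le> N \<Longrightarrow> fapp u p = (\<Sum>k\<le>N. coeff p k * u k)"
  unfolding fapp_def by (rule sum.mono_neutral_left) (auto simp: coeff_eq_0)

lemma fapp_add: "fapp u (p + q) = fapp u p + fapp u q"
proof -
  let ?N = "max (degree p) (degree q)"
  have "fapp u (p+q) = (\<Sum>k\<le>?N. coeff (p+q) k * u k)" by (rule fapp_ext) (rule degree_add_le_max)
  moreover have "fapp u p = (\<Sum>k\<le>?N. coeff p k * u k)" by (rule fapp_ext) simp
  moreover have "fapp u q = (\<Sum>k\<le>?N. coeff q k * u k)" by (rule fapp_ext) simp
  ultimately show ?thesis by (simp add: sum.distrib algebra_simps)
qed

lemma fapp_smult: "fapp u (Polynomial.smult c p) = c * fapp u p"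
proof -
  have "fapp u (Polynomial.smult c p) = (\<Sum>k\<le>degree p. coeff (Polynomial.smult c p) k * u k)" by (rule fapp_ext) (rule degree_smult_le)
  then show ?thesis by (simp add: fapp_def sum_distrib_left algebra_simps)
qed

lemma fapp_0[simp]: "fapp u 0 = 0" by (simp add: fapp_def)
lemma fapp_1: "fapp u 1 = u 0" by (simp add: fapp_def)

lemma fapp_minus: "fapp u (- p) = - fapp u p"
  using fapp_smult[of u "-1" p] by simp

lemma fapp_diff: "fapp u (p - q) = fapp u p - fapp u q"
  using fapp_add[of u p "-q"] fapp_minus[of u q] by simp

lemma fapp_sum: "finite A \<Longrightarrow> fapp u (\<Sum>i\<in>A. f i) = (\<Sum>i\<in>A. fapp u (f i))"
  by (induction rule: finite_induct) (simp_all add: fapp_add)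

lemma fapp_monom: "fapp u (monom c m) = c * u m"
proof -
  have "fapp u (monom c m) = (\<Sum>k\<le>m. coeff (monom c m) k * u k)" by (rule fapp_ext) (rule degree_monom_le)
  also have "\<dots> = (\<Sum>k\<le>m. if k = m then c * u m else 0)" by (rule sum.cong) (auto simp: coeff_monom)
  also have "\<dots> = c * u m" by simp
  finally show ?thesis .
qed

lemma sum_lt2: "1 \<le> N \<Longrightarrow> (\<Sum>k\<le>N. if k < 2 then f k else 0) = f 0 + f (1::nat)"
proof (induction N)
  case 0 then show ?case by simp
next
  case (Suc N) then show ?case by (cases N) auto
qed

lemma Bm_Suc0[simp]: "Bm (Suc 0) = 0" by (simp add: Bm_def)

lemma int_formula: "fapp (finv cheb_mom) p =
            - (1 / pi\<^sup>2) * integral {-1..1}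
                (\<lambda>x. (poly p x - poly p 0 - poly (pderiv p) 0 * x) / x\<^sup>2 * (1 - x\<^sup>2) powr (1/2))
            + (1 / pi) * poly p 0"
proof -
  define N where "N = Suc (degree p)"
  define c where "c = coeff p"
  define I where "I k = (if k < 2 then 0 else pi * (Am (k-2) - Am k))" for k
  define h where "h k x = (if k < 2 then 0 else x^(k-2) * (1 - x\<^sup>2) powr (1/2))" for k and x :: real
  have dN: "degree p \<le> N" and N1: "1 \<le> N" by (simp_all add: N_def)
  have hi: "((\<lambda>x. \<Sum>k\<le>N. c k * h k x) has_integral (\<Sum>k\<le>N. c k * I k)) {-1..1}"
  proof (rule has_integral_sum)
    fix k assume "k \<in> {..N}"
    show "((\<lambda>x. c k * h k x) has_integral (c k * I k)) {-1..1}"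
    proof (cases "k < 2")
      case True then show ?thesis by (simp add: h_def I_def)
    next
      case False
      then have k: "k - 2 + 2 = k" by simp
      have "((\<lambda>x. x^(k-2) * (1 - x\<^sup>2) powr (1/2)) has_integral (pi * (Am (k-2) - Am (k-2+2)))) {-1..1}"
        by (rule w_int)
      then have "((\<lambda>x. h k x) has_integral I k) {-1..1}" using False unfolding k by (simp add: h_def I_def)
      then show ?thesis by (rule has_integral_mult_right)
    qed
  qed simp
  have poly_p: "poly p x = (\<Sum>k\<le>N. c k * x^k)" for x
    unfolding c_def poly_altdef by (rule sum.mono_neutral_left) (auto simp: coeff_eq_0 N_def)
  have p0: "poly p 0 = c 0" by (simp add: c_def poly_0_coeff_0)
  have p1: "poly (pderiv p) 0 = c 1" by (simp add: c_def poly_0_coeff_0 coeff_pderiv)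
  have eqx: "(poly p x - poly p 0 - poly (pderiv p) 0 * x) / x\<^sup>2 * (1 - x\<^sup>2) powr (1/2) = (\<Sum>k\<le>N. c k * h k x)"
    if x: "x \<noteq> 0" for x
  proof -
    have "poly p x - poly p 0 - poly (pderiv p) 0 * x = (\<Sum>k\<le>N. c k * x^k) - (\<Sum>k\<le>N. if k < 2 then c k * x^k else 0)"
      using sum_lt2[OF N1, of "\<lambda>k. c k * x^k"] by (simp add: poly_p p0 p1)
    also have "\<dots> = (\<Sum>k\<le>N. if k < 2 then 0 else c k * x^k)"
      by (subst sum_subtractf[symmetric]) (rule sum.cong, auto)
    finally have e1: "poly p x - poly p 0 - poly (pderiv p) 0 * x = (\<Sum>k\<le>N. if k < 2 then 0 else c k * x^k)" .
    have "(\<Sum>k\<le>N. if k < 2 then 0 else c k * x^k) / x\<^sup>2 * (1 - x\<^sup>2) powr (1/2) = (\<Sum>k\<le>N. c k * h k x)"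
      unfolding sum_divide_distrib sum_distrib_right
    proof (rule sum.cong)
      fix k assume "k \<in> {..N}"
      show "(if k < 2 then 0 else c k * x^k) / x\<^sup>2 * (1 - x\<^sup>2) powr (1/2) = c k * h k x"
      proof (cases "k < 2")
        case False
        then have e: "x^k / x\<^sup>2 = x^(k-2)" using x by (simp add: power_diff)
        have "(if k < 2 then 0 else c k * x^k) / x\<^sup>2 * (1 - x\<^sup>2) powr (1/2) = c k * (x^k / x\<^sup>2) * (1 - x\<^sup>2) powr (1/2)"
          using False by simp
        also have "\<dots> = c k * h k x" using False by (simp add: e h_def)
        finally show ?thesis .
      qed (simp add: h_def)
    qed simp
    with e1 show ?thesis by simp
  qed
  have int: "integral {-1..1} (\<lambda>x. (poly p x - poly p 0 - poly (pderiv p) 0 * x) / x\<^sup>2 * (1 - x\<^sup>2) powr (1/2))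
      = (\<Sum>k\<le>N. c k * I k)"
    by (rule integral_unique, rule has_integral_spike_finite[of "{0}" _ _ "\<lambda>x. \<Sum>k\<le>N. c k * h k x"])
       (use eqx hi in auto)
  have fp: "fapp (finv cheb_mom) p = (\<Sum>k\<le>N. c k * (Bm k / pi))"
    using fapp_ext[OF dN] by (simp add: finv_eq c_def)
  have trm: "c k * (Bm k / pi) = -(1/pi\<^sup>2) * (c k * I k) + (if k = 0 then c k / pi else 0)" for k
  proof (cases "k < 2")
    case True then show ?thesis by (cases k) (auto simp: I_def)
  next
    case False
    then obtain j where k: "k = Suc (Suc j)" by (metis add_2_eq_Suc le_add_diff_inverse not_less)
    show ?thesis unfolding k by (simp add: I_def Bm_pascal field_simps power2_eq_square)
  qed
  have "(\<Sum>k\<le>N. c k * (Bm k / pi)) = (\<Sum>k\<le>N. -(1/pi\<^sup>2) * (c k * I k) + (if k = 0 then c k / pi else 0))"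
    by (simp only: trm)
  also have "\<dots> = (\<Sum>k\<le>N. -(1/pi\<^sup>2) * (c k * I k)) + (\<Sum>k\<le>N. if k = 0 then c k / pi else 0)"
    by (rule sum.distrib)
  also have "\<dots> = -(1/pi\<^sup>2) * (\<Sum>k\<le>N. c k * I k) + (1/pi) * c 0"
    by (simp only: sum_distrib_left) simp
  finally show ?thesis unfolding fp int by (simp only: p0)
qed

abbreviation "uu \<equiv> finv cheb_mom"

declare finv.simps[simp del]

lemma peval_eqI: "(\<And>x. poly p x = poly q x) \<Longrightarrow> p = (q :: real poly)"
  by (metis poly_eq_poly_eq_iff ext)

lemma Bm_rec: "(real n + 2) * Bm (Suc (Suc n)) = (real n - 1) * Bm n"
proof (cases "even n")
  case True
  then obtain m where n: "n = 2*m" by blast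
  have d: "Suc (Suc n) div 2 = Suc m" "n div 2 = m" using n by auto
  have "Bm (Suc (Suc n)) = (-1)^Suc m * ((1/2 - real m) / (real m + 1) * ((1/2) gchoose m))"
    using True d by (simp add: Bm_def gch_step)
  moreover have "Bm n = (-1)^m * ((1/2) gchoose m)" using True d by (simp add: Bm_def)
  ultimately show ?thesis using n by (simp add: field_simps)
qed (simp add: Bm_def)

definition Lop :: "real poly \<Rightarrow> real poly" where
  "Lop p = [:0,-1,0,1:] * pderiv p + [:1,0,2:] * p"

lemma poly_Lop: "poly (Lop p) x = (x^3 - x) * poly (pderiv p) x + (2*x^2+1) * poly p x"
  by (simp add: Lop_def algebra_simps power2_eq_square power3_eq_cube)

lemma Lop_add: "Lop (p + q) = Lop p + Lop q"
  by (rule peval_eqI) (simp add: poly_Lop pderiv_add algebra_simps)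

lemma Lop_smult: "Lop (Polynomial.smult c p) = Polynomial.smult c (Lop p)"
  by (rule peval_eqI) (simp add: poly_Lop pderiv_smult algebra_simps)

lemma Lop_0: "Lop 0 = 0" by (simp add: Lop_def)

lemma Lop_sum: "finite A \<Longrightarrow> Lop (\<Sum>i\<in>A. f i) = (\<Sum>i\<in>A. Lop (f i))"
  by (induction rule: finite_induct) (simp_all add: Lop_0 Lop_add)

lemma Lop_monom: "Lop (monom 1 j) = Polynomial.smult (real j + 2) (monom 1 (j+2)) - Polynomial.smult (real j - 1) (monom 1 j)"
proof (rule peval_eqI)
  fix x :: real
  show "poly (Lop (monom 1 j)) x = poly (Polynomial.smult (real j + 2) (monom 1 (j+2)) - Polynomial.smult (real j - 1) (monom 1 j)) x"
  proof (cases j)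
    case 0 then show ?thesis by (simp add: poly_Lop poly_monom power2_eq_square)
  next
    case (Suc i)
    then show ?thesis by (simp add: poly_Lop poly_monom pderiv_monom algebra_simps power2_eq_square power3_eq_cube)
  qed
qed

lemma fapp_Lop_monom: "fapp uu (Lop (monom 1 j)) = 0"
proof -
  have "fapp uu (Lop (monom 1 j)) = ((real j + 2) * Bm (Suc (Suc j)) - (real j - 1) * Bm j) / pi"
    by (simp only: Lop_monom fapp_diff fapp_smult fapp_monom finv_eq) (simp add: diff_divide_distrib)
  also have "\<dots> = 0" by (simp add: Bm_rec)
  finally show ?thesis .
qed

lemma monom_c: "monom (c::real) i = Polynomial.smult c (monom 1 i)" by (simp add: smult_monom)

lemma fapp_Lop: "fapp uu (Lop p) = 0"
proof -
  have "Lop p = Lop (\<Sum>i\<le>degree p. monom (coeff p i) i)" by (simp only: poly_as_sum_of_monoms)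
  also have "\<dots> = (\<Sum>i\<le>degree p. Lop (monom (coeff p i) i))" by (rule Lop_sum) simp
  also have "\<dots> = (\<Sum>i\<le>degree p. Polynomial.smult (coeff p i) (Lop (monom 1 i)))"
    by (subst monom_c) (simp only: Lop_smult)
  finally have "fapp uu (Lop p) = (\<Sum>i\<le>degree p. coeff p i * fapp uu (Lop (monom 1 i)))"
    by (simp add: fapp_sum fapp_smult)
  then show ?thesis by (simp add: fapp_Lop_monom)
qed

lemma pU: "poly (chebU (Suc (Suc n))) x = x * poly (chebU (Suc n)) x - poly (chebU n) x / 4"
  by simp

lemma pdU: "poly (pderiv (chebU (Suc (Suc n)))) x = poly (chebU (Suc n)) x + x * poly (pderiv (chebU (Suc n))) x - poly (pderiv (chebU n)) x / 4"
  by (simp add: pderiv_mult pderiv_diff pderiv_smult pderiv_pCons)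

lemma LU_step: "poly (Lop (chebU (Suc (Suc n)))) x = x * poly (Lop (chebU (Suc n))) x + (x^3 - x) * poly (chebU (Suc n)) x - poly (Lop (chebU n)) x / 4"
  unfolding poly_Lop pdU pU by (simp add: field_simps)

lemma Qeval: "poly (Lop (chebU (Suc (Suc n)))) x = (real n + 4) * poly (chebU (Suc (Suc (Suc (Suc n))))) x
    + 3/2 * poly (chebU (Suc (Suc n))) x - (real n + 2)/16 * poly (chebU n) x"
proof (induction n rule: less_induct)
  case (less n)
  have L0: "poly (Lop (chebU 0)) x = 2*x^2+1" by (simp add: poly_Lop pderiv_pCons)
  have L1: "poly (Lop (chebU (Suc 0))) x = (x^3 - x) + (2*x^2+1)*x" by (simp add: poly_Lop pderiv_pCons)
  show ?case
  proof (cases n)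
    case 0
    show ?thesis unfolding 0 LU_step L0 L1 pU by (simp add: field_simps power2_eq_square power3_eq_cube)
  next
    case (Suc m)
    show ?thesis
    proof (cases m)
      case 0
      show ?thesis unfolding Suc 0 LU_step L0 L1 pU by (simp add: field_simps power2_eq_square power3_eq_cube)
    next
      case (Suc k)
      have n: "n = Suc (Suc k)" using \<open>n = Suc m\<close> Suc by simp
      have I1: "poly (Lop (chebU (Suc (Suc (Suc k))))) x = (real (Suc k) + 4) * poly (chebU (Suc (Suc (Suc (Suc (Suc k)))))) x
          + 3/2 * poly (chebU (Suc (Suc (Suc k)))) x - (real (Suc k) + 2)/16 * poly (chebU (Suc k)) x"
        using less[of "Suc k"] n by simp
      have I0: "poly (Lop (chebU (Suc (Suc k)))) x = (real k + 4) * poly (chebU (Suc (Suc (Suc (Suc k))))) x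
          + 3/2 * poly (chebU (Suc (Suc k))) x - (real k + 2)/16 * poly (chebU k) x"
        using less[of k] n by simp
      show ?thesis unfolding n LU_step[of "Suc (Suc k)"] I1 I0
        by (simp only: pU) (simp add: field_simps power2_eq_square power3_eq_cube)
    qed
  qed
qed

lemma QU: "Lop (chebU (Suc (Suc n))) = Polynomial.smult (real n + 4) (chebU (Suc (Suc (Suc (Suc n)))))
    + Polynomial.smult (3/2) (chebU (Suc (Suc n))) - Polynomial.smult ((real n + 2)/16) (chebU n)"
  by (rule peval_eqI) (simp only: Qeval poly_add poly_diff poly_smult)

lemma QU0: "Lop (chebU 0) = Polynomial.smult 2 (chebU (Suc (Suc 0))) + Polynomial.smult (3/2) (chebU 0)"
  by (rule peval_eqI) (simp add: poly_Lop pderiv_pCons field_simps power2_eq_square)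

lemma QU1: "Lop (chebU (Suc 0)) = Polynomial.smult 3 (chebU (Suc (Suc (Suc 0)))) + Polynomial.smult (3/2) (chebU (Suc 0))"
  by (rule peval_eqI) (simp add: poly_Lop pderiv_pCons field_simps power2_eq_square power3_eq_cube)

definition Cc :: "nat \<Rightarrow> real" where
  "Cc n = (if even n then (real n + 1) * (-1/4)^(n div 2) / pi else 0)"

lemma Cc_even: "Cc (2*j) = (2 * real j + 1) * (-1/4)^j / pi" by (simp add: Cc_def)

lemma Cc_rec: "(real m + 4) * Cc (Suc (Suc (Suc (Suc m)))) + 3/2 * Cc (Suc (Suc m)) - (real m + 2)/16 * Cc m = 0"
proof (cases "even m")
  case True
  then obtain j where m: "m = 2*j" by blast
  have e1: "Suc (Suc m) = 2 * Suc j" and e2: "Suc (Suc (Suc (Suc m))) = 2 * Suc (Suc j)" using m by simp_all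
  show ?thesis unfolding e2 unfolding e1 unfolding m Cc_even by (simp add: field_simps)
qed (simp add: Cc_def)

lemma cc_eq: "fapp uu (chebU n) = Cc n"
proof (induction n rule: less_induct)
  case (less n)
  have c0: "fapp uu (chebU 0) = 1/pi" by (simp add: fapp_1 finv_eq)
  have c1: "fapp uu (chebU (Suc 0)) = 0"
  proof -
    have "chebU (Suc 0) = monom 1 1" by (simp add: monom_Suc)
    then show ?thesis by (simp add: fapp_monom finv_eq)
  qed
  show ?case
  proof (cases "n < 4")
    case True
    then have nn: "n = 0 \<or> n = Suc 0 \<or> n = Suc (Suc 0) \<or> n = Suc (Suc (Suc 0))" by auto
    have c2: "fapp uu (chebU (Suc (Suc 0))) = - 3/4 / pi"
    proof -
      have "2 * fapp uu (chebU (Suc (Suc 0))) + 3/2 * fapp uu (chebU 0) = 0"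
        using fapp_Lop[of "chebU 0"] unfolding QU0 by (simp only: fapp_add fapp_smult)
      then show ?thesis unfolding c0 by (simp add: field_simps)
    qed
    have c3: "fapp uu (chebU (Suc (Suc (Suc 0)))) = 0"
    proof -
      have "3 * fapp uu (chebU (Suc (Suc (Suc 0)))) + 3/2 * fapp uu (chebU (Suc 0)) = 0"
        using fapp_Lop[of "chebU (Suc 0)"] unfolding QU1 by (simp only: fapp_add fapp_smult)
      then show ?thesis unfolding c1 by simp
    qed
    have C: "Cc 0 = 1/pi" "Cc (Suc 0) = 0" "Cc (Suc (Suc 0)) = - 3/4 / pi" "Cc (Suc (Suc (Suc 0))) = 0"
      by (simp_all add: Cc_def)
    from nn show ?thesis
      by (elim disjE) (simp_all only: c0 c1 c2 c3 C)
  next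
    case False
    define m where "m = n - 4"
    have n: "n = Suc (Suc (Suc (Suc m)))" using False unfolding m_def by presburger
    have h: "(real m + 4) * fapp uu (chebU n) + 3/2 * Cc (Suc (Suc m)) - (real m + 2)/16 * Cc m = 0"
    proof -
      have "fapp uu (Lop (chebU (Suc (Suc m)))) = 0" by (rule fapp_Lop)
      then have "(real m + 4) * fapp uu (chebU n) + 3/2 * fapp uu (chebU (Suc (Suc m))) - (real m + 2)/16 * fapp uu (chebU m) = 0"
        unfolding QU n by (simp add: fapp_add fapp_diff fapp_smult)
      moreover have "fapp uu (chebU (Suc (Suc m))) = Cc (Suc (Suc m))" by (rule less) (simp add: n)
      moreover have "fapp uu (chebU m) = Cc m" by (rule less) (simp add: n)
      ultimately show ?thesis by simp
    qed
    have "(real m + 4) * fapp uu (chebU n) = (real m + 4) * Cc n"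
      using h Cc_rec[of m] unfolding n by linarith
    then show ?thesis by simp
  qed
qed

lemma chebU_coeffs: "coeff (chebU n) n = 1 \<and> (\<forall>k>n. coeff (chebU n) k = 0)"
proof (induction n rule: less_induct)
  case (less n)
  show ?case
  proof (cases n)
    case 0 then show ?thesis by simp
  next
    case (Suc m)
    show ?thesis
    proof (cases m)
      case 0 then show ?thesis using Suc by (auto simp: coeff_pCons split: nat.split)
    next
      case (Suc k)
      have n: "n = Suc (Suc k)" using \<open>n = Suc m\<close> Suc by simp
      have I1: "coeff (chebU (Suc k)) (Suc k) = 1" "\<forall>j>Suc k. coeff (chebU (Suc k)) j = 0"
        using less[of "Suc k"] n by auto
      have I0: "\<forall>j>k. coeff (chebU k) j = 0" using less[of k] n by auto
      have c: "coeff (chebU (Suc (Suc k))) (Suc j) = coeff (chebU (Suc k)) j - coeff (chebU k) (Suc j) / 4" for j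
        by simp
      show ?thesis unfolding n
      proof (intro conjI allI impI)
        show "coeff (chebU (Suc (Suc k))) (Suc (Suc k)) = 1" unfolding c using I1 I0 by simp
        fix j assume j: "Suc (Suc k) < j"
        then obtain j' where j': "j = Suc j'" by (cases j) auto
        show "coeff (chebU (Suc (Suc k))) j = 0" unfolding j' c using I1 I0 j j' by simp
      qed
    qed
  qed
qed

lemma deg_from_coeffs: "coeff p n = 1 \<Longrightarrow> (\<forall>k>n. coeff p k = 0) \<Longrightarrow> degree p = n \<and> lead_coeff p = (1::real)"
proof -
  assume a: "coeff p n = 1" "\<forall>k>n. coeff p k = 0"
  have "degree p = n" by (rule antisym) (use a in \<open>auto intro: degree_le le_degree\<close>)
  then show ?thesis using a by simp
qed

lemma Tminus_coeffs: "coeff (Tminus n) n = 1 \<and> (\<forall>k>n. coeff (Tminus n) k = 0)"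
proof (cases "n < 2")
  case True
  then have "n = 0 \<or> n = 1" by auto
  then show ?thesis by (auto simp: Tminus_def coeff_pCons split: nat.split)
next
  case False
  have U: "coeff (chebU n) n = 1" "\<forall>k>n. coeff (chebU n) k = 0" using chebU_coeffs by auto
  have U2: "\<forall>k>n-2. coeff (chebU (n-2)) k = 0" using chebU_coeffs by auto
  have "coeff (chebU (n-2)) k = 0" if "k \<ge> n" for k using U2 that False by auto
  then show ?thesis using False U by (auto simp: Tminus_def)
qed

lemma Tminus_deg: "degree (Tminus n) = n \<and> lead_coeff (Tminus n) = 1"
  by (rule deg_from_coeffs) (use Tminus_coeffs[of n] in auto)

lemma tor: "(a::real) \<noteq> 0 \<Longrightarrow> p \<noteq> 0 \<Longrightarrow> (a + 2) * ((-1/4) * q) / p + (a+2)/(4*a) * (a * q / p) = 0"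
  by (simp add: field_simps)

lemma T_orth: "n \<ge> 1 \<Longrightarrow> fapp uu (Tminus n) = 0"
proof -
  assume n1: "n \<ge> 1"
  show ?thesis
  proof (cases "n = 1")
    case True
    have T1: "Tminus n = chebU (Suc 0)" using True by (simp add: Tminus_def)
    show ?thesis unfolding T1 cc_eq by (simp add: Cc_def)
  next
    case False
    then obtain k where n: "n = Suc (Suc k)" using n1 by (metis One_nat_def Suc_le_D Suc_le_lessD not0_implies_Suc nat_less_le)
    have T: "Tminus n = chebU (Suc (Suc k)) + Polynomial.smult (gammaM (Suc (Suc k))) (chebU k)"
      by (simp add: Tminus_def n)
    have f: "fapp uu (Tminus n) = Cc (Suc (Suc k)) + gammaM (Suc (Suc k)) * Cc k"
      by (simp only: T fapp_add fapp_smult cc_eq)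
    show ?thesis
    proof (cases "even k")
      case True
      then obtain j where k: "k = 2*j" by blast
      have e: "Suc (Suc k) = 2 * Suc j" using k by simp
      have A: "Cc (2 * Suc j) = (2*real j + 1 + 2) * ((-1/4) * (-1/4)^j) / pi"
        unfolding Cc_even by (simp add: algebra_simps)
      have B: "Cc (2 * j) = (2*real j + 1) * (-1/4)^j / pi" by (rule Cc_even)
      have g: "gammaM (2 * Suc j) = (2*real j + 1 + 2) / (4 * (2 * real j + 1))"
        by (simp add: gammaM_def algebra_simps)
      have pos: "2 * real j + 1 \<noteq> 0" by (simp add: add_nonneg_eq_0_iff)
      show ?thesis unfolding f e unfolding k A B g by (rule tor[OF pos pi_neq_zero])
    qed (simp add: f Cc_def)
  qed
qed

lemma rec_gen:
  fixes x u0 u1 g2 g3 g4 a :: real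
  assumes h1: "g4 + a = 1/4 + g3" and h2: "a * g2 = g3/4"
  shows "x * ((x*(x*u1 - u0/4) - u1/4) + g3*u1) =
    (x*(x*(x*u1 - u0/4) - u1/4) - (x*u1 - u0/4)/4) + g4*(x*u1 - u0/4) + a*((x*u1 - u0/4) + g2*u0)"
proof -
  have "(x*(x*(x*u1 - u0/4) - u1/4) - (x*u1 - u0/4)/4) + g4*(x*u1 - u0/4) + a*((x*u1 - u0/4) + g2*u0)
      = (x*(x*(x*u1 - u0/4) - u1/4) - (x*u1 - u0/4)/4) + (g4 + a)*(x*u1 - u0/4) + (a*g2)*u0"
    by (simp add: algebra_simps)
  also have "\<dots> = (x*(x*(x*u1 - u0/4) - u1/4) - (x*u1 - u0/4)/4) + (1/4 + g3)*(x*u1 - u0/4) + (g3/4)*u0"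
    by (simp only: h1 h2)
  also have "\<dots> = x * ((x*(x*u1 - u0/4) - u1/4) + g3*u1)"
    by (simp add: field_simps)
  finally show ?thesis by simp
qed

lemma fa1: "(t::real) \<noteq> 0 \<Longrightarrow> b = t - 2 \<Longrightarrow> (t+2)/(4*t) + b/(4*t) = 1/4 + 1/4"
  by (simp add: field_simps)
lemma fa2: "(t::real) \<noteq> 0 \<Longrightarrow> b \<noteq> 0 \<Longrightarrow> b/(4*t) * (t/(4*b)) = (1/4)/4"
  by (simp add: field_simps)

lemma coef_facts0:
  "gammaM (Suc (Suc (Suc (Suc k)))) + aminus (Suc (Suc (Suc k))) = 1/4 + gammaM (Suc (Suc (Suc k)))
   \<and> aminus (Suc (Suc (Suc k))) * gammaM (Suc (Suc k)) = gammaM (Suc (Suc (Suc k))) / 4"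
proof (cases "even k")
  case True
  have v: "gammaM (Suc (Suc (Suc k))) = 1/4" "gammaM (Suc (Suc (Suc (Suc k)))) = ((real k + 3)+2)/(4*(real k + 3))"
    "aminus (Suc (Suc (Suc k))) = (real k + 1)/(4*(real k + 3))" "gammaM (Suc (Suc k)) = (real k + 3)/(4*(real k + 1))"
    using True by (simp_all add: gammaM_def aminus_def algebra_simps)
  show ?thesis unfolding v
  proof
    show "((real k+3)+2)/(4*(real k+3)) + (real k+1)/(4*(real k+3)) = 1/4 + 1/4" by (rule fa1) simp_all
    show "(real k+1)/(4*(real k+3)) * ((real k+3)/(4*(real k+1))) = (1/4)/4" by (rule fa2) simp_all
  qed
next
  case False
  have v: "gammaM (Suc (Suc (Suc k))) = (real k + 4)/(4*(real k + 2))" "gammaM (Suc (Suc (Suc (Suc k)))) = 1/4"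
    "aminus (Suc (Suc (Suc k))) = (real k + 4)/(4*(real k + 2))" "gammaM (Suc (Suc k)) = 1/4"
    using False by (simp_all add: gammaM_def aminus_def algebra_simps)
  show ?thesis unfolding v by simp
qed

lemmas coef_facts = conjunct1[OF coef_facts0] conjunct2[OF coef_facts0]

lemma T_rec: "n \<ge> 1 \<Longrightarrow> [:0, 1:] * Tminus n = Tminus (Suc n) + Polynomial.smult (aminus n) (Tminus (n - 1))"
proof -
  assume n1: "n \<ge> 1"
  consider "n = 1" | "n = 2" | k where "n = Suc (Suc (Suc k))"
    using n1 by (metis One_nat_def Suc_le_D le_SucE numeral_2_eq_2 not0_implies_Suc)
  then show ?thesis
  proof cases
    case 1
    show ?thesis unfolding 1
      by (rule peval_eqI) (simp add: Tminus_def gammaM_def aminus_def numeral_2_eq_2 field_simps power2_eq_square)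
  next
    case 2
    have g3: "gammaM (Suc (Suc (Suc 0))) = 1/4"
    proof - have "gammaM 3 = 1/4" by (simp add: gammaM_def) then show ?thesis by (simp add: numeral_3_eq_3) qed
    have g2: "gammaM (Suc (Suc 0)) = 3/4"
    proof - have "gammaM 2 = 3/4" by (simp add: gammaM_def) then show ?thesis by (simp add: numeral_2_eq_2) qed
    have a2: "aminus (Suc (Suc 0)) = 3/4"
    proof - have "aminus 2 = 3/4" by (simp add: aminus_def) then show ?thesis by (simp add: numeral_2_eq_2) qed
    show ?thesis unfolding 2 numeral_2_eq_2
      by (rule peval_eqI) (simp add: Tminus_def g3 g2 a2 field_simps)
  next
    case 3
    show ?thesis
    proof (rule peval_eqI)
      fix x :: real
      define u0 where "u0 = poly (chebU k) x"
      define u1 where "u1 = poly (chebU (Suc k)) x"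
      have e2: "poly (chebU (Suc (Suc k))) x = x*u1 - u0/4" by (simp add: u0_def u1_def)
      have e3: "poly (chebU (Suc (Suc (Suc k)))) x = x*(x*u1 - u0/4) - u1/4"
        by (simp only: pU u0_def u1_def; simp add: field_simps)
      have e4: "poly (chebU (Suc (Suc (Suc (Suc k))))) x = x*(x*(x*u1 - u0/4) - u1/4) - (x*u1 - u0/4)/4"
        by (simp only: pU u0_def u1_def; simp add: field_simps)
      have T3: "poly (Tminus (Suc (Suc (Suc k)))) x = (x*(x*u1 - u0/4) - u1/4) + gammaM (Suc (Suc (Suc k))) * u1"
        by (simp add: Tminus_def u0_def u1_def field_simps)
      have T4: "poly (Tminus (Suc (Suc (Suc (Suc k))))) x = (x*(x*(x*u1 - u0/4) - u1/4) - (x*u1 - u0/4)/4) + gammaM (Suc (Suc (Suc (Suc k)))) * (x*u1 - u0/4)"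
        by (simp add: Tminus_def u0_def u1_def field_simps)
      have T2: "poly (Tminus (Suc (Suc k))) x = (x*u1 - u0/4) + gammaM (Suc (Suc k)) * u0"
        by (simp add: Tminus_def u0_def u1_def field_simps)
      have "poly ([:0, 1:] * Tminus n) x = x * poly (Tminus (Suc (Suc (Suc k)))) x" using 3 by simp
      also have "\<dots> = poly (Tminus (Suc n)) x + aminus n * poly (Tminus (n - 1)) x"
        unfolding T3 3 diff_Suc_1 T4 T2 by (rule rec_gen[OF coef_facts])
      finally show "poly ([:0, 1:] * Tminus n) x = poly (Tminus (Suc n) + Polynomial.smult (aminus n) (Tminus (n - 1))) x"
        by simp
    qed
  qed
qed

lemma monom_Suc_mult: "monom 1 (Suc k) * p = monom 1 k * ([:0, 1:] * (p :: real poly))"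
  by (rule peval_eqI) (simp add: poly_monom)

lemma favard_orth:
  fixes u :: "nat \<Rightarrow> real" and P :: "nat \<Rightarrow> real poly" and a :: "nat \<Rightarrow> real"
  assumes rec: "\<And>n. n \<ge> 1 \<Longrightarrow> [:0, 1:] * P n = P (Suc n) + Polynomial.smult (a n) (P (n - 1))"
    and orth: "\<And>n. n \<ge> 1 \<Longrightarrow> fapp u (P n) = 0"
  shows "\<forall>n. k < n \<longrightarrow> fapp u (monom 1 k * P n) = 0"
proof (induction k)
  case 0 then show ?case using orth by simp
next
  case (Suc k)
  show ?case
  proof (intro allI impI)
    fix n assume kn: "Suc k < n"
    have r: "[:0, 1:] * P n = P (Suc n) + Polynomial.smult (a n) (P (n - 1))" using rec[of n] kn by simp
    have "monom 1 (Suc k) * P n = monom 1 k * P (Suc n) + Polynomial.smult (a n) (monom 1 k * P (n - 1))"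
      unfolding monom_Suc_mult r by (simp add: distrib_left)
    then show "fapp u (monom 1 (Suc k) * P n) = 0"
      using Suc kn by (simp add: fapp_add fapp_smult)
  qed
qed

lemma favard_norm:
  fixes u :: "nat \<Rightarrow> real" and P :: "nat \<Rightarrow> real poly" and a :: "nat \<Rightarrow> real"
  assumes rec: "\<And>n. n \<ge> 1 \<Longrightarrow> [:0, 1:] * P n = P (Suc n) + Polynomial.smult (a n) (P (n - 1))"
    and orth: "\<And>n. n \<ge> 1 \<Longrightarrow> fapp u (P n) = 0"
    and P0: "P 0 = 1" and u0: "u 0 \<noteq> 0" and anz: "\<And>n. n \<ge> 1 \<Longrightarrow> a n \<noteq> 0"
  shows "fapp u (monom 1 n * P n) \<noteq> 0"
proof (induction n)
  case 0 then show ?case using P0 u0 by (simp add: fapp_1)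
next
  case (Suc n)
  have o: "fapp u (monom 1 n * P (Suc (Suc n))) = 0"
    using favard_orth[OF rec orth, of n] by simp
  have "monom 1 (Suc n) * P (Suc n) = monom 1 n * P (Suc (Suc n)) + Polynomial.smult (a (Suc n)) (monom 1 n * P n)"
  proof -
    have r: "[:0, 1:] * P (Suc n) = P (Suc (Suc n)) + Polynomial.smult (a (Suc n)) (P n)" using rec[of "Suc n"] by simp
    show ?thesis unfolding monom_Suc_mult r by (simp add: distrib_left)
  qed
  then have "fapp u (monom 1 (Suc n) * P (Suc n)) = a (Suc n) * fapp u (monom 1 n * P n)"
    using o by (simp add: fapp_add fapp_smult)
  then show ?case using Suc anz[of "Suc n"] by simp
qed

lemma aminus_nz: "n \<ge> 1 \<Longrightarrow> aminus n \<noteq> 0"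
proof -
  assume n: "n \<ge> 1"
  show ?thesis
  proof (cases "n = 1")
    case True then show ?thesis by (simp add: aminus_def)
  next
    case False
    then have n2: "n \<ge> 2" using n by simp
    show ?thesis
    proof (cases "even n")
      case True
      then show ?thesis using n2 by (simp add: aminus_def)
    next
      case False
      then have "n \<noteq> 2" by auto
      then have "n \<ge> 3" using n2 by simp
      then have "real n - 2 \<noteq> 0" by simp
      then show ?thesis using False n2 by (simp add: aminus_def)
    qed
  qed
qed

lemma OPS_Tminus: "monic_OPS uu Tminus"
  unfolding monic_OPS_def
proof (rule allI, intro conjI)
  fix n
  show "degree (Tminus n) = n" "lead_coeff (Tminus n) = 1" using Tminus_deg[of n] Tminus_coeffs[of n] by auto
  show "\<forall>k<n. fapp uu (monom 1 k * Tminus n) = 0"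
    using favard_orth[OF T_rec T_orth] by auto
  show "fapp uu (monom 1 n * Tminus n) \<noteq> 0"
  proof (rule favard_norm[OF T_rec T_orth])
    show "Tminus 0 = 1" by (simp add: Tminus_def)
    show "uu 0 \<noteq> 0" by (simp add: finv_eq)
    show "\<And>n. 1 \<le> n \<Longrightarrow> aminus n \<noteq> 0" by (rule aminus_nz)
  qed
qed

lemma poly_sum_lt: "(\<forall>k\<ge>i. coeff q k = 0) \<Longrightarrow> q = (\<Sum>k\<in>{0..<i}. monom (coeff q k) k)"
proof -
  assume a: "\<forall>k\<ge>i. coeff q k = 0"
  show ?thesis
  proof (rule poly_eqI)
    fix j
    have "coeff (\<Sum>k\<in>{0..<i}. monom (coeff q k) k) j = (\<Sum>k\<in>{0..<i}. if k = j then coeff q k else 0)"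
      by (simp add: coeff_sum coeff_monom)
    also have "\<dots> = coeff q j" using a by (cases "j < i") auto
    finally show "coeff q j = coeff (\<Sum>k\<in>{0..<i}. monom (coeff q k) k) j" by simp
  qed
qed

lemma monom_mult_smult: "monom c k * p = Polynomial.smult c (monom 1 k * (p :: real poly))"
  by (simp add: smult_monom_mult)

lemma orth_gen:
  assumes ops: "monic_OPS u P" and q: "\<forall>k\<ge>i. coeff q k = 0"
  shows "fapp u (q * P i) = 0"
proof -
  have qe: "q = (\<Sum>k\<in>{0..<i}. monom (coeff q k) k)" by (rule poly_sum_lt[OF q])
  have "q * P i = (\<Sum>k\<in>{0..<i}. monom (coeff q k) k) * P i" by (subst qe[symmetric]) (rule refl)
  also have "\<dots> = (\<Sum>k\<in>{0..<i}. Polynomial.smult (coeff q k) (monom 1 k * P i))"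
    by (simp add: sum_distrib_right monom_mult_smult[of "coeff q _"])
  finally have "fapp u (q * P i) = (\<Sum>k\<in>{0..<i}. coeff q k * fapp u (monom 1 k * P i))"
    by (simp add: fapp_sum fapp_smult)
  also have "\<dots> = 0" using ops by (auto simp: monic_OPS_def intro!: sum.neutral)
  finally show ?thesis .
qed

lemma fapp_prod:
  assumes p: "\<forall>k\<ge>m. coeff p k = 0" and q: "\<forall>k\<ge>m. coeff q k = 0"
  shows "fapp u (p * q) = (\<Sum>l\<in>{0..<m}. (\<Sum>k\<in>{0..<m}. coeff p k * u (k+l)) * coeff q l)"
proof -
  have pe: "p = (\<Sum>k\<in>{0..<m}. monom (coeff p k) k)" by (rule poly_sum_lt[OF p])
  have qe: "q = (\<Sum>k\<in>{0..<m}. monom (coeff q k) k)" by (rule poly_sum_lt[OF q])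
  have "p * q = (\<Sum>k\<in>{0..<m}. monom (coeff p k) k) * (\<Sum>l\<in>{0..<m}. monom (coeff q l) l)"
    by (subst pe[symmetric], subst qe[symmetric]) (rule refl)
  also have "\<dots> = (\<Sum>k\<in>{0..<m}. \<Sum>l\<in>{0..<m}. monom (coeff p k * coeff q l) (k+l))"
    by (simp add: sum_product mult_monom)
  finally have "fapp u (p * q) = (\<Sum>k\<in>{0..<m}. \<Sum>l\<in>{0..<m}. coeff p k * coeff q l * u (k+l))"
    by (simp add: fapp_sum fapp_monom)
  also have "\<dots> = (\<Sum>l\<in>{0..<m}. \<Sum>k\<in>{0..<m}. coeff p k * coeff q l * u (k+l))"
    by (rule sum.swap)
  also have "\<dots> = (\<Sum>l\<in>{0..<m}. (\<Sum>k\<in>{0..<m}. coeff p k * u (k+l)) * coeff q l)"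
    by (simp only: sum_distrib_right) (simp add: mult_ac)
  finally show ?thesis .
qed

lemma OPS_quasi:
  assumes ops: "monic_OPS u P"
  shows "quasi_definite u"
  unfolding quasi_definite_def
proof
  fix n
  define m where "m = Suc n"
  define H where "H = Matrix.mat m m (\<lambda>(i,j). u (i+j))"
  define C where "C = Matrix.mat m m (\<lambda>(i,j). coeff (P i) j)"
  define D where "D = C * H * transpose_mat C"
  have CH: "C \<in> carrier_mat m m" "H \<in> carrier_mat m m" "transpose_mat C \<in> carrier_mat m m"
    by (auto simp: C_def H_def)
  have degP: "\<forall>k\<ge>m. coeff (P i) k = 0" if "i < m" for i
  proof -
    have "degree (P i) = i" using ops by (simp add: monic_OPS_def)
    then show ?thesis using that by (auto intro: coeff_eq_0)
  qed
  have Dij: "D $$ (i,j) = fapp u (P i * P j)" if ij: "i < m" "j < m" for i j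
  proof -
    have "D $$ (i,j) = (\<Sum>l\<in>{0..<m}. (\<Sum>k\<in>{0..<m}. coeff (P i) k * u (k+l)) * coeff (P j) l)"
      using ij by (simp add: D_def C_def H_def scalar_prod_def)
    also have "\<dots> = fapp u (P i * P j)" using fapp_prod[OF degP[OF ij(1)] degP[OF ij(2)]] by simp
    finally show ?thesis .
  qed
  have Dc: "D \<in> carrier_mat m m" using CH by (simp add: D_def)
  have ut: "upper_triangular D" unfolding upper_triangular_def
  proof (intro allI impI)
    fix i j assume i: "i < dim_row D" and j: "j < i"
    have im: "i < m" using i Dc by simp
    have "D $$ (i,j) = fapp u (P j * P i)" using Dij[of i j] im j by (simp add: mult.commute)
    also have "\<dots> = 0"
    proof (rule orth_gen[OF ops])
      have "degree (P j) = j" using ops by (simp add: monic_OPS_def)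
      then show "\<forall>k\<ge>i. coeff (P j) k = 0" using j by (auto intro: coeff_eq_0)
    qed
    finally show "D $$ (i,j) = 0" .
  qed
  have diag: "D $$ (i,i) \<noteq> 0" if im: "i < m" for i
  proof -
    have dl0: "degree (P i) = i" "lead_coeff (P i) = 1" "fapp u (monom 1 i * P i) \<noteq> 0"
      using ops unfolding monic_OPS_def by blast+
    have dl: "degree (P i) = i" "coeff (P i) i = 1" "fapp u (monom 1 i * P i) \<noteq> 0"
      using dl0 by simp_all
    define r where "r = P i - monom 1 i"
    have r: "\<forall>k\<ge>i. coeff r k = 0"
    proof (intro allI impI)
      fix k assume "i \<le> k"
      then show "coeff r k = 0" using dl by (cases "k = i") (auto simp: r_def coeff_monom intro: coeff_eq_0)
    qed
    have "P i * P i = monom 1 i * P i + r * P i" by (simp add: r_def algebra_simps)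
    then have "fapp u (P i * P i) = fapp u (monom 1 i * P i)" using orth_gen[OF ops r] by (simp add: fapp_add)
    then show ?thesis using Dij[OF im im] dl by simp
  qed
  have "Determinant.det D \<noteq> 0"
  proof -
    have "Determinant.det D = prod_list (diag_mat D)" by (rule det_upper_triangular[OF ut Dc])
    moreover have "0 \<notin> set (diag_mat D)" using diag Dc by (auto simp: diag_mat_def)
    ultimately show ?thesis by (simp add: prod_list_zero_iff)
  qed
  moreover have "Determinant.det D = Determinant.det C * Determinant.det H * Determinant.det (transpose_mat C)"
  proof -
    have "C * H \<in> carrier_mat m m" using CH by simp
    then have "Determinant.det D = Determinant.det (C * H) * Determinant.det (transpose_mat C)"
      unfolding D_def using CH by (intro det_mult) auto
    also have "\<dots> = Determinant.det C * Determinant.det H * Determinant.det (transpose_mat C)"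
      using CH by (simp add: det_mult)
    finally show ?thesis .
  qed
  ultimately have "Determinant.det H \<noteq> 0" by auto
  then show "Determinant.det (Matrix.mat (Suc n) (Suc n) (\<lambda>(i, j). u (i + j))) \<noteq> 0" by (simp add: H_def m_def)
qed

theorem mainTheorem16:
  shows "(\<forall>p :: real poly. fapp (finv cheb_mom) p =
            - (1 / pi\<^sup>2) * integral {-1..1}
                (\<lambda>x. (poly p x - poly p 0 - poly (pderiv p) 0 * x) / x\<^sup>2 * (1 - x\<^sup>2) powr (1/2))
            + (1 / pi) * poly p 0)
       \<and> quasi_definite (finv cheb_mom)
       \<and> monic_OPS (finv cheb_mom) Tminus
       \<and> (\<forall>n\<ge>1. [:0, 1:] * Tminus n = Tminus (Suc n) + Polynomial.smult (aminus n) (Tminus (n - 1)))"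
  using int_formula OPS_quasi[OF OPS_Tminus] OPS_Tminus T_rec by blast

end
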